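(* Let $\Sigma$ be a finite alphabet. A language $L\subseteq\Sigma^*$ is regular in the classical sense if and only if the set $\{\triangleleft\, w\,\triangleright \mid w\in L\}$ is the language of arrows recognized by some nondeterministic finite-state automaton over the category $\mathcal{F}(\mathrm{Br}(\Sigma))$.
   Context: $\mathrm{Br}(\Sigma)$ is the graph with three nodes $\bot,*,\top$, a loop $a:*\to *$ for each $a\in\Sigma$, an edge $\triangleleft:\bot\to *$ and an edge $\triangleright:*\to\top$; $\mathcal{F}(\mathrm{Br}(\Sigma))$ is the free category it generates (objects are nodes, arrows are finite paths), so the arrows $\bot\to\top$ are exactly the paths $\triangleleft\, w\,\triangleright$ for $w\in\Sigma^*$. Composition is written diagrammatically. A functor $p:\mathcal{D}\to\mathcal{C}$ is ULF if for every arrow $\alpha$ of $\mathcal{D}$ and arrows $u,v$ of $\mathcal{C}$ with $p(\alpha)=uv$ there is a unique pair $\beta,\gamma$ with $\alpha=\beta\gamma$, $p(\beta)=u$, $p(\gamma)=v$; it is finitary if $p^{-1}(A)$ and $p^{-1}(w)$ are finite for every object $A$ and arrow $w$ of $\mathcal{C}$. A nondeterministic finite-state automaton over a category $\mathcal{C}$ is a tuple $M=(\mathcal{C},\mathcal{Q},p,q_0,q_f)$ with $p:\mathcal{Q}\to\mathcal{C}$ a finitary ULF functor and $q_0,q_f$ objects of $\mathcal{Q}$; the language of arrows it recognizes is $\{p(\alpha)\mid \alpha:q_0\to q_f \text{ in } \mathcal{Q}\}\subseteq \mathcal{C}(p(q_0),p(q_f))$. "Regular in the classical sense" means recognized by a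 classical nondeterministic finite automaton over $\Sigma$ (finite set of states, finite set of labelled transitions, a set of initial states and a set of accepting states, no $\epsilon$-transitions). *)

theory Defs
  imports Main
begin

record ('o,'m) cat =
  Obj  :: "'o set"
  Arr  :: "'m set"
  Dom  :: "'m \<Rightarrow> 'o"
  Cod  :: "'m \<Rightarrow> 'o"
  Ident :: "'o \<Rightarrow> 'm"
  Comp :: "'m \<Rightarrow> 'm \<Rightarrow> 'm"   (* Comp f g = f ; g, defined when Cod f = Dom g *)

definition is_category :: "('o,'m) cat \<Rightarrow> bool" where
  "is_category C \<longleftrightarrow>
     (\<forall>f\<in>Arr C. Dom C f \<in> Obj C \<and> Cod C f \<in> Obj C) \<and>
     (\<forall>A\<in>Obj C. Ident C A \<in> Arr C \<and> Dom C (Ident C A) = A \<and> Cod C (Ident C A) = A) \<and>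
     (\<forall>f\<in>Arr C. \<forall>g\<in>Arr C. Cod C f = Dom C g \<longrightarrow>
        Comp C f g \<in> Arr C \<and> Dom C (Comp C f g) = Dom C f \<and> Cod C (Comp C f g) = Cod C g) \<and>
     (\<forall>f\<in>Arr C. Comp C (Ident C (Dom C f)) f = f \<and> Comp C f (Ident C (Cod C f)) = f) \<and>
     (\<forall>f\<in>Arr C. \<forall>g\<in>Arr C. \<forall>h\<in>Arr C. Cod C f = Dom C g \<and> Cod C g = Dom C h \<longrightarrow>
        Comp C (Comp C f g) h = Comp C f (Comp C g h))"

record ('o1,'m1,'o2,'m2) cfunctor =
  FObj :: "'o1 \<Rightarrow> 'o2"
  FArr :: "'m1 \<Rightarrow> 'm2"

definition is_functor ::
  "('o1,'m1) cat \<Rightarrow> ('o2,'m2) cat \<Rightarrow> ('o1,'m1,'o2,'m2) cfunctor \<Rightarrow> bool" where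
  "is_functor D C p \<longleftrightarrow>
     (\<forall>A\<in>Obj D. FObj p A \<in> Obj C) \<and>
     (\<forall>f\<in>Arr D. FArr p f \<in> Arr C \<and> Dom C (FArr p f) = FObj p (Dom D f)
                \<and> Cod C (FArr p f) = FObj p (Cod D f)) \<and>
     (\<forall>A\<in>Obj D. FArr p (Ident D A) = Ident C (FObj p A)) \<and>
     (\<forall>f\<in>Arr D. \<forall>g\<in>Arr D. Cod D f = Dom D g \<longrightarrow>
        FArr p (Comp D f g) = Comp C (FArr p f) (FArr p g))"

definition is_ULF ::
  "('o1,'m1) cat \<Rightarrow> ('o2,'m2) cat \<Rightarrow> ('o1,'m1,'o2,'m2) cfunctor \<Rightarrow> bool" where
  "is_ULF D C p \<longleftrightarrow>
     (\<forall>\<alpha>\<in>Arr D. \<forall>u\<in>Arr C. \<forall>v\<in>Arr C.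
        Cod C u = Dom C v \<and> FArr p \<alpha> = Comp C u v \<longrightarrow>
        (\<exists>!(\<beta>,\<gamma>). \<beta> \<in> Arr D \<and> \<gamma> \<in> Arr D \<and> Cod D \<beta> = Dom D \<gamma> \<and>
                  \<alpha> = Comp D \<beta> \<gamma> \<and> FArr p \<beta> = u \<and> FArr p \<gamma> = v))"

definition is_finitary ::
  "('o1,'m1) cat \<Rightarrow> ('o2,'m2) cat \<Rightarrow> ('o1,'m1,'o2,'m2) cfunctor \<Rightarrow> bool" where
  "is_finitary D C p \<longleftrightarrow>
     (\<forall>A\<in>Obj C. finite {q\<in>Obj D. FObj p q = A}) \<and>
     (\<forall>w\<in>Arr C. finite {\<alpha>\<in>Arr D. FArr p \<alpha> = w})"

definition is_cat_NFA ::
  "('o2,'m2) cat \<Rightarrow> ('o1,'m1) cat \<Rightarrow> ('o1,'m1,'o2,'m2) cfunctor \<Rightarrow> 'o1 \<Rightarrow> 'o1 \<Rightarrow> bool" where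
  "is_cat_NFA C Q p q0 qf \<longleftrightarrow>
     is_category C \<and> is_category Q \<and> is_functor Q C p \<and> is_ULF Q C p \<and> is_finitary Q C p \<and>
     q0 \<in> Obj Q \<and> qf \<in> Obj Q"

definition cat_NFA_lang ::
  "('o1,'m1) cat \<Rightarrow> ('o1,'m1,'o2,'m2) cfunctor \<Rightarrow> 'o1 \<Rightarrow> 'o1 \<Rightarrow> 'm2 set" where
  "cat_NFA_lang Q p q0 qf = {FArr p \<alpha> | \<alpha>. \<alpha> \<in> Arr Q \<and> Dom Q \<alpha> = q0 \<and> Cod Q \<alpha> = qf}"

datatype br_node = BrBot | BrStar | BrTop

datatype 'a br_edge = BrLoop 'a | BrOpen | BrClose

fun br_src :: "'a br_edge \<Rightarrow> br_node" where
  "br_src (BrLoop a) = BrStar" | "br_src BrOpen = BrBot" | "br_src BrClose = BrStar"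

fun br_tgt :: "'a br_edge \<Rightarrow> br_node" where
  "br_tgt (BrLoop a) = BrStar" | "br_tgt BrOpen = BrStar" | "br_tgt BrClose = BrTop"

definition br_edges :: "'a set \<Rightarrow> 'a br_edge set" where
  "br_edges \<Sigma> = {BrLoop a | a. a \<in> \<Sigma>} \<union> {BrOpen, BrClose}"

fun br_path :: "'a set \<Rightarrow> br_node \<Rightarrow> 'a br_edge list \<Rightarrow> br_node \<Rightarrow> bool" where
  "br_path \<Sigma> A [] B \<longleftrightarrow> A = B"
| "br_path \<Sigma> A (e # es) B \<longleftrightarrow> e \<in> br_edges \<Sigma> \<and> br_src e = A \<and> br_path \<Sigma> (br_tgt e) es B"

type_synonym 'a br_arrow = "br_node \<times> 'a br_edge list \<times> br_node"

definition FBr :: "'a set \<Rightarrow> (br_node, 'a br_arrow) cat" where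
  "FBr \<Sigma> = \<lparr> Obj = UNIV,
              Arr = {(A, es, B). br_path \<Sigma> A es B},
              Dom = (\<lambda>(A, es, B). A),
              Cod = (\<lambda>(A, es, B). B),
              Ident = (\<lambda>A. (A, [], A)),
              Comp = (\<lambda>(A, es, B) (B', fs, C). (A, es @ fs, C)) \<rparr>"

definition bracket :: "'a list \<Rightarrow> 'a br_arrow" where
  "bracket w = (BrBot, BrOpen # map BrLoop w @ [BrClose], BrTop)"

fun nfa_run :: "('s \<times> 'a \<times> 's) set \<Rightarrow> 's \<Rightarrow> 'a list \<Rightarrow> 's \<Rightarrow> bool" where
  "nfa_run \<delta> q [] q' \<longleftrightarrow> q = q'"
| "nfa_run \<delta> q (a # w) q' \<longleftrightarrow> (\<exists>q''. (q, a, q'') \<in> \<delta> \<and> nfa_run \<delta> q'' w q')"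

definition classical_regular :: "'a set \<Rightarrow> 'a list set \<Rightarrow> bool" where
  "classical_regular \<Sigma> L \<longleftrightarrow>
     (\<exists>(S :: nat set) \<delta> I F. finite S \<and> finite \<delta> \<and> \<delta> \<subseteq> S \<times> \<Sigma> \<times> S \<and> I \<subseteq> S \<and> F \<subseteq> S \<and>
        L = {w. \<exists>i\<in>I. \<exists>f\<in>F. nfa_run \<delta> i w f})"

end

theory Submission
  imports Defs "HOL-Library.Countable"
begin

lemma br_path_append:
  "br_path \<Sigma> A (es @ fs) C \<longleftrightarrow> (\<exists>B. br_path \<Sigma> A es B \<and> br_path \<Sigma> B fs C)"
  by (induction es arbitrary: A) auto

lemma br_path_det: "br_path \<Sigma> A es B \<Longrightarrow> br_path \<Sigma> A es B' \<Longrightarrow> B = B'"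
  by (induction es arbitrary: A) auto

lemma FBr_simps:
  "Obj (FBr \<Sigma>) = UNIV"
  "x \<in> Arr (FBr \<Sigma>) \<longleftrightarrow> (case x of (A, es, B) \<Rightarrow> br_path \<Sigma> A es B)"
  "Dom (FBr \<Sigma>) (A, es, B) = A"
  "Cod (FBr \<Sigma>) (A, es, B) = B"
  "Ident (FBr \<Sigma>) A = (A, [], A)"
  "Comp (FBr \<Sigma>) (A, es, B) (B', fs, C) = (A, es @ fs, C)"
  by (auto simp: FBr_def split: prod.splits)

lemma FBr_cat: "is_category (FBr \<Sigma>)"
  unfolding is_category_def
  by (auto simp: FBr_def br_path_append)

section \<open>Transfer of arrows to nat\<close>

definition tcat :: "('m \<Rightarrow> nat) \<Rightarrow> ('o,'m) cat \<Rightarrow> ('o, nat) cat" where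
  "tcat h Q = \<lparr> Obj = Obj Q, Arr = h ` Arr Q, Dom = Dom Q \<circ> inv h, Cod = Cod Q \<circ> inv h,
     Ident = h \<circ> Ident Q, Comp = (\<lambda>x y. h (Comp Q (inv h x) (inv h y))) \<rparr>"

definition tfun :: "('m \<Rightarrow> nat) \<Rightarrow> ('o,'m,'o2,'m2) cfunctor \<Rightarrow> ('o,nat,'o2,'m2) cfunctor" where
  "tfun h p = \<lparr> FObj = FObj p, FArr = FArr p \<circ> inv h \<rparr>"

lemma tcat_NFA:
  assumes h: "inj h" and N: "is_cat_NFA C Q p q0 qf"
  shows "is_cat_NFA C (tcat h Q) (tfun h p) q0 qf"
    "cat_NFA_lang (tcat h Q) (tfun h p) q0 qf = cat_NFA_lang Q p q0 qf"
proof -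
  have iv[simp]: "inv h (h x) = x" for x using h by simp
  from N have c: "is_category C" "is_category Q" "is_functor Q C p" "is_ULF Q C p"
     "is_finitary Q C p" "q0 \<in> Obj Q" "qf \<in> Obj Q" by (auto simp: is_cat_NFA_def)
  have "is_category (tcat h Q)" using c(2) unfolding is_category_def tcat_def by auto
  moreover have "is_functor (tcat h Q) C (tfun h p)" using c(3)
    unfolding is_functor_def tcat_def tfun_def by auto
  moreover have "is_ULF (tcat h Q) C (tfun h p)"
    unfolding is_ULF_def
  proof (intro ballI impI)
    fix a u v assume a: "a \<in> Arr (tcat h Q)" and u: "u \<in> Arr C" and v: "v \<in> Arr C"
      and e: "Cod C u = Dom C v \<and> FArr (tfun h p) a = Comp C u v"
    from a obtain \<alpha> where al: "\<alpha> \<in> Arr Q" "a = h \<alpha>" by (auto simp: tcat_def)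
    from e al have "Cod C u = Dom C v \<and> FArr p \<alpha> = Comp C u v" by (auto simp: tfun_def)
    with c(4) al u v have "\<exists>!(\<beta>,\<gamma>). \<beta> \<in> Arr Q \<and> \<gamma> \<in> Arr Q \<and> Cod Q \<beta> = Dom Q \<gamma> \<and>
                  \<alpha> = Comp Q \<beta> \<gamma> \<and> FArr p \<beta> = u \<and> FArr p \<gamma> = v"
      unfolding is_ULF_def by blast
    then obtain bg where bg0: "case bg of (\<beta>,\<gamma>) \<Rightarrow> \<beta> \<in> Arr Q \<and> \<gamma> \<in> Arr Q \<and> Cod Q \<beta> = Dom Q \<gamma> \<and>
                  \<alpha> = Comp Q \<beta> \<gamma> \<and> FArr p \<beta> = u \<and> FArr p \<gamma> = v"
      and un0: "\<And>y. (case y of (\<beta>,\<gamma>) \<Rightarrow> \<beta> \<in> Arr Q \<and> \<gamma> \<in> Arr Q \<and> Cod Q \<beta> = Dom Q \<gamma> \<and>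
                  \<alpha> = Comp Q \<beta> \<gamma> \<and> FArr p \<beta> = u \<and> FArr p \<gamma> = v) \<Longrightarrow> y = bg"
      by (elim ex1E) blast
    obtain \<beta> \<gamma> where bgd: "bg = (\<beta>, \<gamma>)" by (cases bg)
    have bg: "\<beta> \<in> Arr Q \<and> \<gamma> \<in> Arr Q \<and> Cod Q \<beta> = Dom Q \<gamma> \<and>
                  \<alpha> = Comp Q \<beta> \<gamma> \<and> FArr p \<beta> = u \<and> FArr p \<gamma> = v" using bg0 bgd by simp
    have un: "\<And>\<beta>' \<gamma>'. \<beta>' \<in> Arr Q \<and> \<gamma>' \<in> Arr Q \<and> Cod Q \<beta>' = Dom Q \<gamma>' \<and>
                  \<alpha> = Comp Q \<beta>' \<gamma>' \<and> FArr p \<beta>' = u \<and> FArr p \<gamma>' = v \<Longrightarrow> \<beta>' = \<beta> \<and> \<gamma>' = \<gamma>"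
      using un0[of "(_, _)"] bgd by fastforce
    show "\<exists>!(\<beta>, \<gamma>). \<beta> \<in> Arr (tcat h Q) \<and> \<gamma> \<in> Arr (tcat h Q) \<and> Cod (tcat h Q) \<beta> = Dom (tcat h Q) \<gamma> \<and>
            a = Comp (tcat h Q) \<beta> \<gamma> \<and> FArr (tfun h p) \<beta> = u \<and> FArr (tfun h p) \<gamma> = v"
    proof (rule ex1I[where a="(h \<beta>, h \<gamma>)"])
      show "case (h \<beta>, h \<gamma>) of (\<beta>, \<gamma>) \<Rightarrow> \<beta> \<in> Arr (tcat h Q) \<and> \<gamma> \<in> Arr (tcat h Q) \<and> Cod (tcat h Q) \<beta> = Dom (tcat h Q) \<gamma> \<and>
            a = Comp (tcat h Q) \<beta> \<gamma> \<and> FArr (tfun h p) \<beta> = u \<and> FArr (tfun h p) \<gamma> = v"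
        using bg al by (auto simp: tcat_def tfun_def)
    next
      fix y assume "case y of (\<beta>, \<gamma>) \<Rightarrow> \<beta> \<in> Arr (tcat h Q) \<and> \<gamma> \<in> Arr (tcat h Q) \<and> Cod (tcat h Q) \<beta> = Dom (tcat h Q) \<gamma> \<and>
            a = Comp (tcat h Q) \<beta> \<gamma> \<and> FArr (tfun h p) \<beta> = u \<and> FArr (tfun h p) \<gamma> = v"
      then obtain b c where y: "y = (h b, h c)" "b \<in> Arr Q" "c \<in> Arr Q" "Cod Q b = Dom Q c"
        "a = h (Comp Q b c)" "FArr p b = u" "FArr p c = v"
        by (auto simp: tcat_def tfun_def)
      with al h have "\<alpha> = Comp Q b c" by (auto dest: injD)
      with un y have "b = \<beta> \<and> c = \<gamma>" by blast
      with y show "y = (h \<beta>, h \<gamma>)" by simp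
    qed
  qed
  moreover have "is_finitary (tcat h Q) C (tfun h p)"
    unfolding is_finitary_def
  proof (intro conjI ballI)
    fix A assume "A \<in> Obj C" thus "finite {q \<in> Obj (tcat h Q). FObj (tfun h p) q = A}"
      using c(5) by (simp add: is_finitary_def tcat_def tfun_def)
  next
    fix w assume "w \<in> Arr C"
    hence "finite (h ` {\<alpha> \<in> Arr Q. FArr p \<alpha> = w})" using c(5) by (simp add: is_finitary_def)
    moreover have "{\<alpha> \<in> Arr (tcat h Q). FArr (tfun h p) \<alpha> = w} = h ` {\<alpha> \<in> Arr Q. FArr p \<alpha> = w}"
      by (auto simp: tcat_def tfun_def)
    ultimately show "finite {\<alpha> \<in> Arr (tcat h Q). FArr (tfun h p) \<alpha> = w}" by simp
  qed
  ultimately show "is_cat_NFA C (tcat h Q) (tfun h p) q0 qf"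
    using c by (simp add: is_cat_NFA_def tcat_def)
  show "cat_NFA_lang (tcat h Q) (tfun h p) q0 qf = cat_NFA_lang Q p q0 qf"
    unfolding cat_NFA_lang_def
    apply (auto simp: tcat_def tfun_def)
    subgoal for \<alpha> by (rule exI[of _ "h \<alpha>"]) auto
    done
qed

section \<open>Classical regularity over arbitrary state types\<close>

lemma run_transfer:
  assumes inj: "inj_on h S" and d: "\<delta> \<subseteq> S \<times> \<Sigma> \<times> S" and x: "x \<in> S"
  shows "nfa_run ((\<lambda>(x,a,y). (h x, a, h y)) ` \<delta>) (h x) w y' \<longleftrightarrow> (\<exists>y\<in>S. y' = h y \<and> nfa_run \<delta> x w y)"
  using x
proof (induction w arbitrary: x)
  case Nil thus ?case by auto
next
  case (Cons a w)
  show ?case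
  proof
    assume "nfa_run ((\<lambda>(x,a,y). (h x, a, h y)) ` \<delta>) (h x) (a # w) y'"
    then obtain x1 a1 z where t: "(x1,a1,z) \<in> \<delta>" "h x1 = h x" "a1 = a"
      "nfa_run ((\<lambda>(x,a,y). (h x, a, h y)) ` \<delta>) (h z) w y'" by auto
    with d Cons.prems inj have "x1 = x" "z \<in> S" by (auto dest: inj_onD)
    with t Cons.IH show "\<exists>y\<in>S. y' = h y \<and> nfa_run \<delta> x (a # w) y" by auto
  next
    assume "\<exists>y\<in>S. y' = h y \<and> nfa_run \<delta> x (a # w) y"
    then obtain y z where "y \<in> S" "y' = h y" "(x,a,z) \<in> \<delta>" "nfa_run \<delta> z w y" by auto
    moreover have "z \<in> S" using d \<open>(x,a,z) \<in> \<delta>\<close> by auto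
    ultimately show "nfa_run ((\<lambda>(x,a,y). (h x, a, h y)) ` \<delta>) (h x) (a # w) y'"
      using Cons.IH by force
  qed
qed

lemma classical_regular_gen:
  fixes S :: "'q set"
  assumes "finite S" "finite \<delta>" "\<delta> \<subseteq> S \<times> \<Sigma> \<times> S" "I \<subseteq> S" "F \<subseteq> S"
    "L = {w. \<exists>i\<in>I. \<exists>f\<in>F. nfa_run \<delta> i w f}"
  shows "classical_regular \<Sigma> L"
proof -
  obtain h :: "'q \<Rightarrow> nat" where inj: "inj_on h S"
    using finite_imp_inj_to_nat_seg[OF assms(1)] by blast
  let ?\<delta> = "(\<lambda>(x,a,y). (h x, a, h y)) ` \<delta>"
  have "L = {w. \<exists>i\<in>h ` I. \<exists>f\<in>h ` F. nfa_run ?\<delta> i w f}"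
  proof -
    have "(\<exists>i\<in>I. \<exists>f\<in>F. nfa_run \<delta> i w f) \<longleftrightarrow> (\<exists>i\<in>h ` I. \<exists>f\<in>h ` F. nfa_run ?\<delta> i w f)" for w
    proof
      assume "\<exists>i\<in>I. \<exists>f\<in>F. nfa_run \<delta> i w f"
      then obtain i f where i: "i \<in> I" and f: "f \<in> F" and r: "nfa_run \<delta> i w f" by blast
      have iS: "i \<in> S" and fS: "f \<in> S" using i f assms(4,5) by auto
      have "nfa_run ?\<delta> (h i) w (h f)"
        using run_transfer[OF inj assms(3) iS, of w "h f"] fS r by blast
      thus "\<exists>i\<in>h ` I. \<exists>f\<in>h ` F. nfa_run ?\<delta> i w f" using i f by blast
    next
      assume "\<exists>i\<in>h ` I. \<exists>f\<in>h ` F. nfa_run ?\<delta> i w f"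
      then obtain i f where i: "i \<in> I" and f: "f \<in> F" and r: "nfa_run ?\<delta> (h i) w (h f)" by blast
      have iS: "i \<in> S" and fS: "f \<in> S" using i f assms(4,5) by auto
      obtain y where y: "y \<in> S" "h f = h y" "nfa_run \<delta> i w y"
        using run_transfer[OF inj assms(3) iS, of w "h f"] r by blast
      have "f = y" using inj_onD[OF inj y(2) fS y(1)] .
      thus "\<exists>i\<in>I. \<exists>f\<in>F. nfa_run \<delta> i w f" using i f y(3) by blast
    qed
    thus ?thesis unfolding assms(6) by blast
  qed
  moreover have "?\<delta> \<subseteq> h ` S \<times> \<Sigma> \<times> h ` S" using assms(3) by auto
  moreover have "finite (h ` S)" "finite ?\<delta>" "h ` I \<subseteq> h ` S" "h ` F \<subseteq> h ` S"
    using assms(1,2,4,5) by auto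
  ultimately show ?thesis unfolding classical_regular_def
    by (intro exI[of _ "h ` S"] exI[of _ ?\<delta>] exI[of _ "h ` I"] exI[of _ "h ` F"] conjI)
qed


lemma bracket_inj: "inj bracket"
  by (auto simp: inj_def bracket_def inj_map_eq_map)

lemma NFA_facts:
  assumes "is_cat_NFA C Q p q0 qf"
  shows "is_category C" "is_category Q" "is_functor Q C p" "is_ULF Q C p"
     "is_finitary Q C p" "q0 \<in> Obj Q" "qf \<in> Obj Q"
  using assms by (auto simp: is_cat_NFA_def)

lemma ULF_split:
  assumes "is_ULF Q C p" "\<alpha> \<in> Arr Q" "u \<in> Arr C" "v \<in> Arr C" "Cod C u = Dom C v" "FArr p \<alpha> = Comp C u v"
  obtains \<beta> \<gamma> where "\<beta> \<in> Arr Q" "\<gamma> \<in> Arr Q" "Cod Q \<beta> = Dom Q \<gamma>"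
                  "\<alpha> = Comp Q \<beta> \<gamma>" "FArr p \<beta> = u" "FArr p \<gamma> = v"
proof -
  from assms have "\<exists>!(\<beta>,\<gamma>). \<beta> \<in> Arr Q \<and> \<gamma> \<in> Arr Q \<and> Cod Q \<beta> = Dom Q \<gamma> \<and>
                  \<alpha> = Comp Q \<beta> \<gamma> \<and> FArr p \<beta> = u \<and> FArr p \<gamma> = v"
    unfolding is_ULF_def by blast
  then obtain bg where "case bg of (\<beta>,\<gamma>) \<Rightarrow> \<beta> \<in> Arr Q \<and> \<gamma> \<in> Arr Q \<and> Cod Q \<beta> = Dom Q \<gamma> \<and>
                  \<alpha> = Comp Q \<beta> \<gamma> \<and> FArr p \<beta> = u \<and> FArr p \<gamma> = v" by (elim ex1E) blast
  thus ?thesis using that by (cases bg) auto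
qed

context
  fixes \<Sigma> :: "'a set" and Q :: "('q,'m) cat" and p q0 qf
  assumes N: "is_cat_NFA (FBr \<Sigma>) Q p q0 qf"
begin

definition "XS = {q \<in> Obj Q. FObj p q = BrStar}"
definition "X\<delta> = {(Dom Q t, a, Cod Q t) | t a. t \<in> Arr Q \<and> a \<in> \<Sigma> \<and> FArr p t = (BrStar,[BrLoop a],BrStar)}"
definition "XI = {Cod Q t | t. t \<in> Arr Q \<and> Dom Q t = q0 \<and> FArr p t = (BrBot,[BrOpen],BrStar)}"
definition "XF = {Dom Q t | t. t \<in> Arr Q \<and> Cod Q t = qf \<and> FArr p t = (BrStar,[BrClose],BrTop)}"

lemma cQ: "is_category Q" and fQ: "is_functor Q (FBr \<Sigma>) p" and uQ: "is_ULF Q (FBr \<Sigma>) p"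
  and finQ: "is_finitary Q (FBr \<Sigma>) p" and q0Q: "q0 \<in> Obj Q" and qfQ: "qf \<in> Obj Q"
  using NFA_facts[OF N] by auto

lemma arr_dom: "t \<in> Arr Q \<Longrightarrow> Dom Q t \<in> Obj Q \<and> FObj p (Dom Q t) = Dom (FBr \<Sigma>) (FArr p t)"
  using cQ fQ unfolding is_category_def is_functor_def by auto

lemma arr_cod: "t \<in> Arr Q \<Longrightarrow> Cod Q t \<in> Obj Q \<and> FObj p (Cod Q t) = Cod (FBr \<Sigma>) (FArr p t)"
  using cQ fQ unfolding is_category_def is_functor_def by auto

lemma arr_img: "t \<in> Arr Q \<Longrightarrow> FArr p t \<in> Arr (FBr \<Sigma>)"
  using fQ unfolding is_functor_def by auto

lemma comp_props: "t \<in> Arr Q \<Longrightarrow> s \<in> Arr Q \<Longrightarrow> Cod Q t = Dom Q s \<Longrightarrow>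
   Comp Q t s \<in> Arr Q \<and> Dom Q (Comp Q t s) = Dom Q t \<and> Cod Q (Comp Q t s) = Cod Q s \<and>
   FArr p (Comp Q t s) = Comp (FBr \<Sigma>) (FArr p t) (FArr p s)"
  using cQ fQ unfolding is_category_def is_functor_def by auto

lemma XS_fin: "finite XS"
  using finQ unfolding is_finitary_def XS_def by (auto simp: FBr_simps)

lemma X\<delta>_fin: "finite \<Sigma> \<Longrightarrow> finite X\<delta>"
proof -
  assume fs: "finite \<Sigma>"
  have "X\<delta> \<subseteq> (\<Union>a\<in>\<Sigma>. (\<lambda>t. (Dom Q t, a, Cod Q t)) ` {t \<in> Arr Q. FArr p t = (BrStar,[BrLoop a],BrStar)})"
    unfolding X\<delta>_def by auto
  moreover have "finite {t \<in> Arr Q. FArr p t = (BrStar,[BrLoop a],BrStar)}" if "a \<in> \<Sigma>" for a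
    using finQ that unfolding is_finitary_def by (auto simp: FBr_simps br_edges_def)
  ultimately show ?thesis using fs by (meson finite_UN_I finite_imageI finite_subset)
qed

lemma X\<delta>_sub: "X\<delta> \<subseteq> XS \<times> \<Sigma> \<times> XS"
  unfolding X\<delta>_def XS_def using arr_dom arr_cod by (fastforce simp: FBr_simps)

lemma XI_sub: "XI \<subseteq> XS"
  unfolding XI_def XS_def using arr_cod by (fastforce simp: FBr_simps)

lemma XF_sub: "XF \<subseteq> XS"
  unfolding XF_def XS_def using arr_dom by (fastforce simp: FBr_simps)

lemma sound:
  "\<gamma> \<in> Arr Q \<Longrightarrow> FArr p \<gamma> = (BrStar, map BrLoop w @ [BrClose], BrTop) \<Longrightarrow> Cod Q \<gamma> = qf
   \<Longrightarrow> \<exists>f\<in>XF. nfa_run X\<delta> (Dom Q \<gamma>) w f"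
proof (induction w arbitrary: \<gamma>)
  case Nil
  hence "Dom Q \<gamma> \<in> XF" unfolding XF_def by auto
  thus ?case by auto
next
  case (Cons a w)
  have "FArr p \<gamma> \<in> Arr (FBr \<Sigma>)" using arr_img Cons.prems by blast
  hence a: "a \<in> \<Sigma>" using Cons.prems by (auto simp: FBr_simps br_edges_def)
  have e: "FArr p \<gamma> = Comp (FBr \<Sigma>) (BrStar,[BrLoop a],BrStar) (BrStar, map BrLoop w @ [BrClose], BrTop)"
    using Cons.prems by (simp add: FBr_simps)
  have u: "(BrStar,[BrLoop a],BrStar) \<in> Arr (FBr \<Sigma>)" using a by (simp add: FBr_simps br_edges_def)
  have v: "(BrStar, map BrLoop w @ [BrClose], BrTop) \<in> Arr (FBr \<Sigma>)"
    using \<open>FArr p \<gamma> \<in> Arr (FBr \<Sigma>)\<close> Cons.prems by (simp add: FBr_simps)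
  have cd: "Cod (FBr \<Sigma>) (BrStar,[BrLoop a],BrStar) = Dom (FBr \<Sigma>) (BrStar, map BrLoop w @ [BrClose], BrTop)"
    by (simp add: FBr_simps)
  obtain \<beta> \<gamma>' where bg: "\<beta> \<in> Arr Q" "\<gamma>' \<in> Arr Q" "Cod Q \<beta> = Dom Q \<gamma>'"
                  "\<gamma> = Comp Q \<beta> \<gamma>'" "FArr p \<beta> = (BrStar,[BrLoop a],BrStar)"
                  "FArr p \<gamma>' = (BrStar, map BrLoop w @ [BrClose], BrTop)"
    by (rule ULF_split[OF uQ Cons.prems(1) u v cd e])
  have cp0: "Dom Q (Comp Q \<beta> \<gamma>') = Dom Q \<beta>" "Cod Q (Comp Q \<beta> \<gamma>') = Cod Q \<gamma>'"
    using comp_props[OF bg(1,2,3)] by blast+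
  have cp: "Dom Q \<gamma> = Dom Q \<beta>" "Cod Q \<gamma> = Cod Q \<gamma>'" using cp0 bg(4) by simp_all
  have "Cod Q \<gamma>' = qf" using cp(2) Cons.prems(3) by simp
  from Cons.IH[OF bg(2) bg(6) this] obtain f where f: "f \<in> XF" "nfa_run X\<delta> (Dom Q \<gamma>') w f" by blast
  have tr: "(Dom Q \<beta>, a, Cod Q \<beta>) \<in> X\<delta>" unfolding X\<delta>_def using bg(1,5) a
    by (intro CollectI exI[of _ \<beta>] exI[of _ a]) simp
  have "nfa_run X\<delta> (Dom Q \<beta>) (a # w) f" using tr f(2) bg(3) by auto
  thus ?case using cp(1) f(1) by auto
qed

lemma complete:
  "nfa_run X\<delta> s w f \<Longrightarrow> f \<in> XF \<Longrightarrow>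
   \<exists>\<gamma>\<in>Arr Q. Dom Q \<gamma> = s \<and> Cod Q \<gamma> = qf \<and> FArr p \<gamma> = (BrStar, map BrLoop w @ [BrClose], BrTop)"
proof (induction w arbitrary: s)
  case Nil thus ?case unfolding XF_def by auto
next
  case (Cons a w)
  then obtain s'' where "(s,a,s'') \<in> X\<delta>" "nfa_run X\<delta> s'' w f" by auto
  then obtain t where t: "t \<in> Arr Q" "Dom Q t = s" "Cod Q t = s''" "FArr p t = (BrStar,[BrLoop a],BrStar)"
    unfolding X\<delta>_def by auto
  from Cons.IH[OF \<open>nfa_run X\<delta> s'' w f\<close> Cons.prems(2)] obtain \<gamma> where
    g: "\<gamma> \<in> Arr Q" "Dom Q \<gamma> = s''" "Cod Q \<gamma> = qf" "FArr p \<gamma> = (BrStar, map BrLoop w @ [BrClose], BrTop)"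
    by auto
  have "Cod Q t = Dom Q \<gamma>" using t g by simp
  from comp_props[OF t(1) g(1) this]
  have cc: "Comp Q t \<gamma> \<in> Arr Q" "Dom Q (Comp Q t \<gamma>) = Dom Q t" "Cod Q (Comp Q t \<gamma>) = Cod Q \<gamma>"
     "FArr p (Comp Q t \<gamma>) = Comp (FBr \<Sigma>) (FArr p t) (FArr p \<gamma>)" by blast+
  have "FArr p (Comp Q t \<gamma>) = (BrStar, map BrLoop (a # w) @ [BrClose], BrTop)"
    unfolding cc(4) t(4) g(4) by (simp add: FBr_simps)
  thus ?case using cc(1,2,3) t(2) g(3) by (intro bexI[of _ "Comp Q t \<gamma>"]) simp_all
qed

lemma lang_eq:
  assumes "cat_NFA_lang Q p q0 qf = bracket ` L"
  shows "L = {w. \<exists>i\<in>XI. \<exists>f\<in>XF. nfa_run X\<delta> i w f}"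
proof (intro set_eqI iffI)
  fix w assume "w \<in> L"
  hence "bracket w \<in> cat_NFA_lang Q p q0 qf" using assms by auto
  then obtain \<alpha> where al: "\<alpha> \<in> Arr Q" "Dom Q \<alpha> = q0" "Cod Q \<alpha> = qf" "FArr p \<alpha> = bracket w"
    unfolding cat_NFA_lang_def by auto
  have "FArr p \<alpha> \<in> Arr (FBr \<Sigma>)" using arr_img al by blast
  hence r: "(BrStar, map BrLoop w @ [BrClose], BrTop) \<in> Arr (FBr \<Sigma>)"
    using al by (auto simp: FBr_simps bracket_def)
  have e: "FArr p \<alpha> = Comp (FBr \<Sigma>) (BrBot,[BrOpen],BrStar) (BrStar, map BrLoop w @ [BrClose], BrTop)"
    using al by (simp add: FBr_simps bracket_def)
  have u: "(BrBot,[BrOpen],BrStar) \<in> Arr (FBr \<Sigma>)" by (simp add: FBr_simps br_edges_def)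
  have cd: "Cod (FBr \<Sigma>) (BrBot,[BrOpen],BrStar) = Dom (FBr \<Sigma>) (BrStar, map BrLoop w @ [BrClose], BrTop)"
    by (simp add: FBr_simps)
  obtain \<beta> \<gamma> where bg: "\<beta> \<in> Arr Q" "\<gamma> \<in> Arr Q" "Cod Q \<beta> = Dom Q \<gamma>"
                  "\<alpha> = Comp Q \<beta> \<gamma>" "FArr p \<beta> = (BrBot,[BrOpen],BrStar)"
                  "FArr p \<gamma> = (BrStar, map BrLoop w @ [BrClose], BrTop)"
    by (rule ULF_split[OF uQ al(1) u r cd e])
  have cp0: "Dom Q (Comp Q \<beta> \<gamma>) = Dom Q \<beta>" "Cod Q (Comp Q \<beta> \<gamma>) = Cod Q \<gamma>"
    using comp_props[OF bg(1,2,3)] by blast+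
  have cp: "Dom Q \<alpha> = Dom Q \<beta>" "Cod Q \<alpha> = Cod Q \<gamma>" using cp0 bg(4) by simp_all
  have "Dom Q \<beta> = q0" using cp(1) al(2) by simp
  hence XI: "Cod Q \<beta> \<in> XI" unfolding XI_def using bg(1,5) by (intro CollectI exI[of _ \<beta>]) simp
  have "Cod Q \<gamma> = qf" using cp(2) al(3) by simp
  from sound[OF bg(2) bg(6) this] obtain f where f: "f \<in> XF" "nfa_run X\<delta> (Dom Q \<gamma>) w f" by blast
  have "nfa_run X\<delta> (Cod Q \<beta>) w f" using f(2) bg(3) by simp
  thus "w \<in> {w. \<exists>i\<in>XI. \<exists>f\<in>XF. nfa_run X\<delta> i w f}" using XI f(1) by blast
next
  fix w assume "w \<in> {w. \<exists>i\<in>XI. \<exists>f\<in>XF. nfa_run X\<delta> i w f}"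
  then obtain i f where "i \<in> XI" "f \<in> XF" "nfa_run X\<delta> i w f" by auto
  from complete[OF this(3,2)] obtain \<gamma> where
    g: "\<gamma> \<in> Arr Q" "Dom Q \<gamma> = i" "Cod Q \<gamma> = qf" "FArr p \<gamma> = (BrStar, map BrLoop w @ [BrClose], BrTop)"
    by auto
  from \<open>i \<in> XI\<close> obtain t where t: "t \<in> Arr Q" "Cod Q t = i" "Dom Q t = q0" "FArr p t = (BrBot,[BrOpen],BrStar)"
    unfolding XI_def by auto
  have "Cod Q t = Dom Q \<gamma>" using t g by simp
  from comp_props[OF t(1) g(1) this]
  have cc0: "Comp Q t \<gamma> \<in> Arr Q" "Dom Q (Comp Q t \<gamma>) = Dom Q t" "Cod Q (Comp Q t \<gamma>) = Cod Q \<gamma>"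
     "FArr p (Comp Q t \<gamma>) = Comp (FBr \<Sigma>) (FArr p t) (FArr p \<gamma>)" by blast+
  have cc: "Comp Q t \<gamma> \<in> Arr Q" "Dom Q (Comp Q t \<gamma>) = q0" "Cod Q (Comp Q t \<gamma>) = qf"
     "FArr p (Comp Q t \<gamma>) = Comp (FBr \<Sigma>) (FArr p t) (FArr p \<gamma>)" using cc0 t(3) g(3) by simp_all
  have "FArr p (Comp Q t \<gamma>) = bracket w" unfolding cc(4) t(4) g(4) by (simp add: FBr_simps bracket_def)
  hence "bracket w \<in> cat_NFA_lang Q p q0 qf" unfolding cat_NFA_lang_def using cc(1,2,3)
    by (intro CollectI exI[of _ "Comp Q t \<gamma>"]) simp
  hence "bracket w \<in> bracket ` L" using assms by simp
  thus "w \<in> L" using inj_image_mem_iff[OF bracket_inj] by blast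
qed

lemma regular:
  assumes "finite \<Sigma>" "cat_NFA_lang Q p q0 qf = bracket ` L"
  shows "classical_regular \<Sigma> L"
  using classical_regular_gen[OF XS_fin X\<delta>_fin[OF assms(1)] X\<delta>_sub XI_sub XF_sub lang_eq[OF assms(2)]] .

end


definition vnode :: "nat \<Rightarrow> br_node" where
  "vnode v = (if v = 0 then BrBot else if v = 1 then BrTop else BrStar)"

fun lpath :: "(nat \<times> nat \<times> nat) set \<Rightarrow> nat \<Rightarrow> (nat \<times> nat \<times> nat) list \<Rightarrow> nat \<Rightarrow> bool" where
  "lpath E x [] y \<longleftrightarrow> x = y"
| "lpath E x (e # es) y \<longleftrightarrow> e \<in> E \<and> fst e = x \<and> lpath E (snd (snd e)) es y"

lemma lpath_append: "lpath E x (es @ fs) z \<longleftrightarrow> (\<exists>y. lpath E x es y \<and> lpath E y fs z)"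
  by (induction es arbitrary: x) auto

lemma lpath_det: "lpath E x es y \<Longrightarrow> lpath E x es y' \<Longrightarrow> y = y'"
  by (induction es arbitrary: x) auto

lemma lpath_set: "lpath E x es y \<Longrightarrow> set es \<subseteq> E"
  by (induction es arbitrary: x) auto

locale cnfa =
  fixes \<Sigma> :: "'a set" and g :: "'a \<Rightarrow> nat" and S :: "nat set" and \<delta> I F
  assumes finS: "finite S" and fin\<delta>: "finite \<delta>" and dsub: "\<delta> \<subseteq> S \<times> \<Sigma> \<times> S"
    and Isub: "I \<subseteq> S" and Fsub: "F \<subseteq> S" and ginj: "inj_on g \<Sigma>"
begin

definition "E = {(0,0,s+2)|s. s\<in>I} \<union> {(s+2, g a + 2, s'+2)|s a s'. (s,a,s')\<in>\<delta>} \<union> {(f+2,1,1)|f. f\<in>F}"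
definition "dec k = (if k = 0 then BrOpen else if k = 1 then BrClose else BrLoop (inv_into \<Sigma> g (k - 2)))"
definition "D e = dec (fst (snd e))"
definition "V = {0,1} \<union> (\<lambda>s. s+2) ` S"

definition QA :: "(nat, nat \<times> (nat \<times> nat \<times> nat) list \<times> nat) cat" where
  "QA = \<lparr> Obj = V, Arr = {(x,es,y). x \<in> V \<and> lpath E x es y},
     Dom = (\<lambda>(x,es,y). x), Cod = (\<lambda>(x,es,y). y), Ident = (\<lambda>x. (x,[],x)),
     Comp = (\<lambda>(x,es,y) (y',fs,z). (x, es @ fs, z)) \<rparr>"

definition pA :: "(nat, nat \<times> (nat \<times> nat \<times> nat) list \<times> nat, br_node, 'a br_arrow) cfunctor" where
  "pA = \<lparr> FObj = vnode, FArr = (\<lambda>(x,es,y). (vnode x, map D es, vnode y)) \<rparr>"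

lemma QA_simps:
  "Obj QA = V"
  "(x, es, y) \<in> Arr QA \<longleftrightarrow> x \<in> V \<and> lpath E x es y"
  "Dom QA (x, es, y) = x"
  "Cod QA (x, es, y) = y"
  "Ident QA x = (x, [], x)"
  "Comp QA (x, es, y) (y', fs, z) = (x, es @ fs, z)"
  "FObj pA v = vnode v"
  "FArr pA (x, es, y) = (vnode x, map D es, vnode y)"
  by (auto simp: QA_def pA_def)

lemma E_cases:
  assumes "e \<in> E"
  obtains (op) s where "s \<in> I" "e = (0,0,s+2)"
  | (lp) s a s' where "(s,a,s') \<in> \<delta>" "e = (s+2, g a + 2, s'+2)"
  | (cl) f where "f \<in> F" "e = (f+2,1,1)"
  using assms unfolding E_def by blast

lemma finE: "finite E"
proof -
  have a: "{(0::nat,0::nat,s+2)|s. s\<in>I} = (\<lambda>s. (0,0,s+2)) ` I" by blast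
  have c: "{(f+2,1::nat,1::nat)|f. f\<in>F} = (\<lambda>f. (f+2,1,1)) ` F" by blast
  have b: "{(s+2, g a + 2, s'+2)|s a s'. (s,a,s')\<in>\<delta>} \<subseteq> (\<lambda>t. (fst t + 2, g (fst (snd t)) + 2, snd (snd t) + 2)) ` \<delta>"
  proof
    fix x assume "x \<in> {(s+2, g a + 2, s'+2)|s a s'. (s,a,s')\<in>\<delta>}"
    then obtain s a s' where "(s,a,s') \<in> \<delta>" "x = (s+2, g a + 2, s'+2)" by blast
    thus "x \<in> (\<lambda>t. (fst t + 2, g (fst (snd t)) + 2, snd (snd t) + 2)) ` \<delta>"
      by (intro rev_image_eqI[of "(s,a,s')"]) simp_all
  qed
  have "finite I" "finite F" using finS Isub Fsub finite_subset by auto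
  hence "finite {(0::nat,0::nat,s+2)|s. s\<in>I}" "finite {(f+2,1::nat,1::nat)|f. f\<in>F}"
    using a c by simp_all
  moreover have "finite {(s+2, g a + 2, s'+2)|s a s'. (s,a,s')\<in>\<delta>}"
    by (rule finite_subset[OF b]) (simp add: fin\<delta>)
  ultimately show ?thesis unfolding E_def by blast
qed

lemma E_V: "e \<in> E \<Longrightarrow> snd (snd e) \<in> V"
  by (erule E_cases) (use dsub Isub Fsub in \<open>auto simp: V_def\<close>)

lemma dec_loop: "a \<in> \<Sigma> \<Longrightarrow> dec (g a + 2) = BrLoop a" "a \<in> \<Sigma> \<Longrightarrow> dec (Suc (Suc (g a))) = BrLoop a"
  unfolding dec_def using ginj by simp_all

lemma E_br: "e \<in> E \<Longrightarrow> D e \<in> br_edges \<Sigma> \<and> br_src (D e) = vnode (fst e) \<and> br_tgt (D e) = vnode (snd (snd e))"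
proof (erule E_cases)
  fix s assume "e = (0,0,s+2)" thus ?thesis by (simp add: D_def dec_def br_edges_def vnode_def)
next
  fix s a s' assume "(s,a,s') \<in> \<delta>" "e = (s+2, g a + 2, s'+2)"
  moreover have "a \<in> \<Sigma>" using dsub \<open>(s,a,s') \<in> \<delta>\<close> by auto
  ultimately show ?thesis by (simp add: D_def dec_loop br_edges_def vnode_def)
next
  fix f assume "e = (f+2,1,1)" thus ?thesis by (simp add: D_def dec_def br_edges_def vnode_def)
qed

lemma lpath_V: "lpath E x es y \<Longrightarrow> x \<in> V \<Longrightarrow> y \<in> V"
  by (induction es arbitrary: x) (auto dest: E_V)

lemma lpath_br: "lpath E x es y \<Longrightarrow> br_path \<Sigma> (vnode x) (map D es) (vnode y)"
  by (induction es arbitrary: x) (auto dest: E_br)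

lemma Arr_QA_E:
  assumes "f \<in> Arr QA"
  obtains x es y where "f = (x, es, y)" "x \<in> V" "lpath E x es y"
  using assms by (cases f) (simp add: QA_simps)

lemma QA_cat: "is_category QA"
proof -
  have 1: "Dom QA f \<in> Obj QA \<and> Cod QA f \<in> Obj QA" if "f \<in> Arr QA" for f
    using that by (rule Arr_QA_E) (simp add: QA_simps lpath_V)
  have 2: "Ident QA A \<in> Arr QA \<and> Dom QA (Ident QA A) = A \<and> Cod QA (Ident QA A) = A" if "A \<in> Obj QA" for A
    using that by (simp add: QA_simps)
  have 3: "Comp QA f g \<in> Arr QA \<and> Dom QA (Comp QA f g) = Dom QA f \<and> Cod QA (Comp QA f g) = Cod QA g"
    if fA: "f \<in> Arr QA" and gA: "g \<in> Arr QA" and cd: "Cod QA f = Dom QA g" for f g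
  proof -
    obtain x es y where f: "f = (x, es, y)" "x \<in> V" "lpath E x es y" using fA by (rule Arr_QA_E)
    obtain x' es' y' where g: "g = (x', es', y')" "x' \<in> V" "lpath E x' es' y'" using gA by (rule Arr_QA_E)
    have "x' = y" using cd f g by (simp add: QA_simps)
    hence "lpath E x (es @ es') y'" using f g lpath_append by blast
    thus ?thesis using f g \<open>x' = y\<close> by (simp add: QA_simps)
  qed
  have 4: "Comp QA (Ident QA (Dom QA f)) f = f \<and> Comp QA f (Ident QA (Cod QA f)) = f" if "f \<in> Arr QA" for f
    using that by (rule Arr_QA_E) (simp add: QA_simps)
  have 5: "Comp QA (Comp QA f g) h = Comp QA f (Comp QA g h)" for f g h
    by (cases f; cases g; cases h) (simp add: QA_simps)
  show ?thesis unfolding is_category_def using 1 2 3 4 5 by blast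
qed

lemma pA_fun: "is_functor QA (FBr \<Sigma>) pA"
proof -
  have 1: "\<forall>A\<in>Obj QA. FObj pA A \<in> Obj (FBr \<Sigma>)" by (simp add: FBr_simps)
  have 2: "FArr pA f \<in> Arr (FBr \<Sigma>) \<and> Dom (FBr \<Sigma>) (FArr pA f) = FObj pA (Dom QA f)
                \<and> Cod (FBr \<Sigma>) (FArr pA f) = FObj pA (Cod QA f)" if "f \<in> Arr QA" for f
    using that by (rule Arr_QA_E) (simp add: QA_simps FBr_simps lpath_br)
  have 3: "FArr pA (Ident QA A) = Ident (FBr \<Sigma>) (FObj pA A)" for A
    by (simp add: QA_simps FBr_simps)
  have 4: "FArr pA (Comp QA f g) = Comp (FBr \<Sigma>) (FArr pA f) (FArr pA g)" for f g
    by (cases f; cases g) (simp add: QA_simps FBr_simps)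
  show ?thesis unfolding is_functor_def using 1 2 3 4 by blast
qed

lemma QA_ULF: "is_ULF QA (FBr \<Sigma>) pA"
  unfolding is_ULF_def
proof (intro ballI impI)
  fix \<alpha> u v assume aA: "\<alpha> \<in> Arr QA" and uA: "u \<in> Arr (FBr \<Sigma>)" and vA: "v \<in> Arr (FBr \<Sigma>)"
    and h: "Cod (FBr \<Sigma>) u = Dom (FBr \<Sigma>) v \<and> FArr pA \<alpha> = Comp (FBr \<Sigma>) u v"
  obtain x es y where al: "\<alpha> = (x, es, y)" "x \<in> V" "lpath E x es y" using aA by (rule Arr_QA_E)
  obtain A us B where u: "u = (A, us, B)" by (cases u)
  obtain B' vs C where v: "v = (B', vs, C)" by (cases v)
  have pu: "br_path \<Sigma> A us B" using uA u by (simp add: FBr_simps)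
  have BB: "B' = B" using h u v by (simp add: FBr_simps)
  have hx: "vnode x = A" and hes: "map D es = us @ vs" and hy: "vnode y = C"
    using h u v al by (simp_all add: FBr_simps QA_simps)
  define n where "n = length us"
  have tk: "map D (take n es) = us" unfolding n_def using hes by (metis append_eq_conv_conj take_map)
  have dr: "map D (drop n es) = vs" unfolding n_def using hes by (metis append_eq_conv_conj drop_map)
  have "lpath E x (take n es @ drop n es) y" using al by simp
  then obtain m where m1: "lpath E x (take n es) m" and m2: "lpath E m (drop n es) y"
    using lpath_append by blast
  have mV: "m \<in> V" using lpath_V[OF m1 al(2)] .
  have "br_path \<Sigma> A us (vnode m)" using lpath_br[OF m1] hx tk by simp
  hence vm: "vnode m = B" using br_path_det pu by blast
  let ?P = "\<lambda>(\<beta>, \<gamma>). \<beta> \<in> Arr QA \<and> \<gamma> \<in> Arr QA \<and> Cod QA \<beta> = Dom QA \<gamma> \<and>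
            \<alpha> = Comp QA \<beta> \<gamma> \<and> FArr pA \<beta> = u \<and> FArr pA \<gamma> = v"
  show "\<exists>!(\<beta>, \<gamma>). \<beta> \<in> Arr QA \<and> \<gamma> \<in> Arr QA \<and> Cod QA \<beta> = Dom QA \<gamma> \<and>
            \<alpha> = Comp QA \<beta> \<gamma> \<and> FArr pA \<beta> = u \<and> FArr pA \<gamma> = v"
  proof (rule ex1I[of ?P "((x, take n es, m), (m, drop n es, y))"])
    show "?P ((x, take n es, m), (m, drop n es, y))"
      using al mV m1 m2 tk dr vm hx hy u v BB by (simp add: QA_simps)
  next
    fix bc assume Pbc: "?P bc"
    obtain x1 e1 y1 x2 e2 y2 where bc: "bc = ((x1, e1, y1), (x2, e2, y2))"
      by (metis prod.exhaust)
    from Pbc bc have big: "lpath E x1 e1 y1 \<and> y1 = x2 \<and> (x, es, y) = (x1, e1 @ e2, y2) \<and> map D e1 = us"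
      using al u by (auto simp: QA_simps)
    hence p1: "lpath E x1 e1 y1" and c12: "y1 = x2" and eq: "(x, es, y) = (x1, e1 @ e2, y2)"
      and f1: "map D e1 = us" by blast+
    have x1: "x1 = x" and es: "es = e1 @ e2" and y2: "y2 = y" using eq by simp_all
    have le: "length e1 = n" unfolding n_def using f1 by (metis length_map)
    have e1: "e1 = take n es" and e2: "e2 = drop n es" using es le by simp_all
    have "y1 = m" using lpath_det[OF m1] p1 x1 e1 by simp
    thus "bc = ((x, take n es, m), (m, drop n es, y))" using bc x1 e1 e2 c12 y2 by simp
  qed
qed

lemma finV: "finite V" unfolding V_def using finS by simp

lemma QA_fin: "is_finitary QA (FBr \<Sigma>) pA"
  unfolding is_finitary_def
proof (intro conjI ballI)
  fix A show "finite {q \<in> Obj QA. FObj pA q = A}" using finV by (simp add: QA_simps)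
next
  fix w :: "'a br_arrow" assume "w \<in> Arr (FBr \<Sigma>)"
  obtain A ws B where w: "w = (A, ws, B)" by (cases w)
  have "{\<alpha> \<in> Arr QA. FArr pA \<alpha> = w} \<subseteq> V \<times> {es. set es \<subseteq> E \<and> length es = length ws} \<times> V"
  proof
    fix \<alpha> assume "\<alpha> \<in> {\<alpha> \<in> Arr QA. FArr pA \<alpha> = w}"
    hence aA: "\<alpha> \<in> Arr QA" and fa: "FArr pA \<alpha> = w" by auto
    obtain x es y where al: "\<alpha> = (x, es, y)" "x \<in> V" "lpath E x es y" using aA by (rule Arr_QA_E)
    have "map D es = ws" using fa al w by (simp add: QA_simps)
    hence "length es = length ws" by (metis length_map)
    moreover have "set es \<subseteq> E" using lpath_set[OF al(3)] .
    moreover have "y \<in> V" using lpath_V[OF al(3) al(2)] .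
    ultimately show "\<alpha> \<in> V \<times> {es. set es \<subseteq> E \<and> length es = length ws} \<times> V" using al by simp
  qed
  moreover have "finite (V \<times> {es. set es \<subseteq> E \<and> length es = length ws} \<times> V)"
    using finV finite_lists_length_eq[OF finE] by simp
  ultimately show "finite {\<alpha> \<in> Arr QA. FArr pA \<alpha> = w}" using finite_subset by blast
qed

lemma lpath_from1: "lpath E 1 es y \<Longrightarrow> es = []"
proof (cases es)
  case (Cons e es')
  assume "lpath E 1 es y"
  hence "e \<in> E" "fst e = 1" using Cons by simp_all
  from this(1) have False using \<open>fst e = 1\<close> by (cases rule: E_cases) simp_all
  thus ?thesis ..
qed simp

lemma star_path: "lpath E (s+2) es 1 \<Longrightarrow> \<exists>w f. f \<in> F \<and> nfa_run \<delta> s w f \<and> map D es = map BrLoop w @ [BrClose]"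
proof (induction es arbitrary: s)
  case Nil thus ?case by simp
next
  case (Cons e es)
  hence eE: "e \<in> E" and fe: "fst e = s + 2" and rest: "lpath E (snd (snd e)) es 1" by simp_all
  from eE show ?case
  proof (cases rule: E_cases)
    case (op s1) thus ?thesis using fe by simp
  next
    case (lp s1 a s')
    hence s1: "s1 = s" using fe by simp
    have a: "a \<in> \<Sigma>" using dsub lp(1) by auto
    from Cons.IH[of s'] rest lp(2) obtain w f where "f \<in> F" "nfa_run \<delta> s' w f"
      "map D es = map BrLoop w @ [BrClose]" by auto
    moreover have "D e = BrLoop a" using lp(2) a by (simp add: D_def dec_loop)
    ultimately show ?thesis using lp(1) s1
      by (intro exI[of _ "a # w"] exI[of _ f]) auto
  next
    case (cl f)
    hence "f = s" using fe by simp
    have "es = []" using rest cl(2) lpath_from1 by simp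
    moreover have "D e = BrClose" using cl(2) by (simp add: D_def dec_def)
    ultimately show ?thesis using cl(1) \<open>f = s\<close>
      by (intro exI[of _ "[]"] exI[of _ f]) simp
  qed
qed

lemma run_path: "nfa_run \<delta> s w f \<Longrightarrow> f \<in> F \<Longrightarrow> \<exists>es. lpath E (s+2) es 1 \<and> map D es = map BrLoop w @ [BrClose]"
proof (induction w arbitrary: s)
  case Nil
  hence "s = f" by simp
  have "(f+2, 1, 1) \<in> E" using Nil.prems(2) unfolding E_def by blast
  moreover have "D (f+2, 1, 1) = BrClose" by (simp add: D_def dec_def)
  ultimately show ?case using \<open>s = f\<close> by (intro exI[of _ "[(f+2, 1, 1)]"]) (simp add: D_def dec_def)
next
  case (Cons a w)
  then obtain s'' where t: "(s, a, s'') \<in> \<delta>" and r: "nfa_run \<delta> s'' w f" by auto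
  from Cons.IH[OF r Cons.prems(2)] obtain es where es: "lpath E (s''+2) es 1"
    "map D es = map BrLoop w @ [BrClose]" by blast
  have a: "a \<in> \<Sigma>" using dsub t by auto
  have "(s+2, g a + 2, s''+2) \<in> E" using t unfolding E_def by blast
  moreover have "D (s+2, g a + 2, s''+2) = BrLoop a" using a by (simp add: D_def dec_loop)
  ultimately show ?case using es by (intro exI[of _ "(s+2, g a + 2, s''+2) # es"]) simp
qed

lemma QA_lang:
  assumes L: "L = {w. \<exists>i\<in>I. \<exists>f\<in>F. nfa_run \<delta> i w f}"
  shows "cat_NFA_lang QA pA 0 1 = bracket ` L"
proof (intro set_eqI iffI)
  fix z assume "z \<in> cat_NFA_lang QA pA 0 1"
  then obtain \<alpha> where aA: "\<alpha> \<in> Arr QA" and d: "Dom QA \<alpha> = 0" and c: "Cod QA \<alpha> = 1" and z: "z = FArr pA \<alpha>"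
    unfolding cat_NFA_lang_def by blast
  obtain x es y where al: "\<alpha> = (x, es, y)" "x \<in> V" "lpath E x es y" using aA by (rule Arr_QA_E)
  have x: "x = 0" and y: "y = 1" using d c al by (simp_all add: QA_simps)
  obtain e es' where es: "es = e # es'" using al(3) x y by (cases es) auto
  have eE: "e \<in> E" and fe: "fst e = 0" and rest: "lpath E (snd (snd e)) es' 1"
    using al(3) x y es by simp_all
  from eE obtain i where i: "i \<in> I" "e = (0, 0, i+2)"
    using fe by (cases rule: E_cases) simp_all
  from star_path[of i es'] rest i obtain w f where wf: "f \<in> F" "nfa_run \<delta> i w f"
    "map D es' = map BrLoop w @ [BrClose]" by auto
  have "w \<in> L" using L i wf by blast
  moreover have "D e = BrOpen" using i by (simp add: D_def dec_def)
  ultimately show "z \<in> bracket ` L" using z al x y es wf(3)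
    by (simp add: QA_simps bracket_def vnode_def)
next
  fix z assume "z \<in> bracket ` L"
  then obtain w where w: "w \<in> L" and z: "z = bracket w" by blast
  then obtain i f where i: "i \<in> I" and f: "f \<in> F" and r: "nfa_run \<delta> i w f" using L by blast
  from run_path[OF r f] obtain es where es: "lpath E (i+2) es 1" "map D es = map BrLoop w @ [BrClose]"
    by blast
  have eE: "(0, 0, i+2) \<in> E" using i unfolding E_def by blast
  have "(0, (0,0,i+2) # es, 1) \<in> Arr QA" using eE es by (simp add: QA_simps V_def)
  moreover have "FArr pA (0, (0,0,i+2) # es, 1) = bracket w"
    using es by (simp add: QA_simps bracket_def vnode_def D_def dec_def)
  ultimately show "z \<in> cat_NFA_lang QA pA 0 1" unfolding cat_NFA_lang_def using z
    by (intro CollectI exI[of _ "(0, (0,0,i+2) # es, 1)"]) (simp add: QA_simps)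
qed

lemma QA_NFA: "is_cat_NFA (FBr \<Sigma>) QA pA 0 1"
  unfolding is_cat_NFA_def using FBr_cat QA_cat pA_fun QA_ULF QA_fin by (simp add: QA_simps V_def)

end


lemma regular_to_cat:
  fixes \<Sigma> :: "'a set" and L :: "'a list set"
  assumes fin: "finite \<Sigma>" and reg: "classical_regular \<Sigma> L"
  shows "\<exists>(Q :: (nat, nat) cat) p q0 qf. is_cat_NFA (FBr \<Sigma>) Q p q0 qf \<and>
              cat_NFA_lang Q p q0 qf = bracket ` L"
proof -
  obtain S :: "nat set" and \<delta> I F where r: "finite S" "finite \<delta>" "\<delta> \<subseteq> S \<times> \<Sigma> \<times> S" "I \<subseteq> S" "F \<subseteq> S"
    "L = {w. \<exists>i\<in>I. \<exists>f\<in>F. nfa_run \<delta> i w f}"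
    using reg unfolding classical_regular_def by blast
  obtain g :: "'a \<Rightarrow> nat" where g: "inj_on g \<Sigma>"
    using finite_imp_inj_to_nat_seg[OF fin] by blast
  interpret c: cnfa \<Sigma> g S \<delta> I F using r g by unfold_locales
  have N: "is_cat_NFA (FBr \<Sigma>) c.QA c.pA 0 1" by (rule c.QA_NFA)
  have "is_cat_NFA (FBr \<Sigma>) (tcat to_nat c.QA) (tfun to_nat c.pA) 0 1"
    "cat_NFA_lang (tcat to_nat c.QA) (tfun to_nat c.pA) 0 1 = cat_NFA_lang c.QA c.pA 0 1"
    using tcat_NFA[OF inj_to_nat N] by blast+
  moreover have "cat_NFA_lang c.QA c.pA 0 1 = bracket ` L" by (rule c.QA_lang[OF r(6)])
  ultimately show ?thesis by blast
qed

theorem mainTheorem4: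
  fixes \<Sigma> :: "'a set" and L :: "'a list set"
  assumes "finite \<Sigma>" and "L \<subseteq> lists \<Sigma>"
  shows "(classical_regular \<Sigma> L \<longleftrightarrow>
           (\<exists>(Q :: (nat, nat) cat) p q0 qf. is_cat_NFA (FBr \<Sigma>) Q p q0 qf \<and>
              cat_NFA_lang Q p q0 qf = bracket ` L))
       \<and> (\<forall>(Q :: ('q, 'm) cat) p q0 qf. is_cat_NFA (FBr \<Sigma>) Q p q0 qf \<and>
              cat_NFA_lang Q p q0 qf = bracket ` L \<longrightarrow> classical_regular \<Sigma> L)"
proof -
  have P2: "\<forall>(Q :: ('q, 'm) cat) p q0 qf. is_cat_NFA (FBr \<Sigma>) Q p q0 qf \<and>
              cat_NFA_lang Q p q0 qf = bracket ` L \<longrightarrow> classical_regular \<Sigma> L"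
  proof (intro allI impI)
    fix Q :: "('q, 'm) cat" and p q0 qf
    assume h: "is_cat_NFA (FBr \<Sigma>) Q p q0 qf \<and> cat_NFA_lang Q p q0 qf = bracket ` L"
    show "classical_regular \<Sigma> L" using regular[OF conjunct1[OF h] assms(1) conjunct2[OF h]] .
  qed
  have P1b: "classical_regular \<Sigma> L" if h0: "\<exists>(Q :: (nat, nat) cat) p q0 qf. is_cat_NFA (FBr \<Sigma>) Q p q0 qf \<and>
              cat_NFA_lang Q p q0 qf = bracket ` L"
  proof -
    from h0 obtain Q :: "(nat, nat) cat" and p q0 qf where
      h: "is_cat_NFA (FBr \<Sigma>) Q p q0 qf" "cat_NFA_lang Q p q0 qf = bracket ` L" by blast
    show ?thesis using regular[OF h(1) assms(1) h(2)] .
  qed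
  have P1: "classical_regular \<Sigma> L \<longleftrightarrow>
           (\<exists>(Q :: (nat, nat) cat) p q0 qf. is_cat_NFA (FBr \<Sigma>) Q p q0 qf \<and>
              cat_NFA_lang Q p q0 qf = bracket ` L)"
  proof
    assume "classical_regular \<Sigma> L"
    thus "\<exists>(Q :: (nat, nat) cat) p q0 qf. is_cat_NFA (FBr \<Sigma>) Q p q0 qf \<and>
              cat_NFA_lang Q p q0 qf = bracket ` L" by (rule regular_to_cat[OF assms(1)])
  next
    assume "\<exists>(Q :: (nat, nat) cat) p q0 qf. is_cat_NFA (FBr \<Sigma>) Q p q0 qf \<and>
              cat_NFA_lang Q p q0 qf = bracket ` L"
    thus "classical_regular \<Sigma> L" by (rule P1b)
  qed
  show ?thesis using P1 P2 by (rule conjI)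
qed

end
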